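(* Let $T$ be a sound arithmetical theory. Then $\mathrm{SA}_{L(T)} + T + \mathrm{IND}(\mathit{sk}^\omega(L(T))) \sqsubseteq_{L(T)} \mathrm{Tr}(L(T))$, i.e. every $L(T)$ sentence provable in $\mathrm{SA}_{L(T)} + T + \mathrm{IND}(\mathit{sk}^\omega(L(T)))$ is true in $\mathbb{N}$.
   Context: An arithmetical language contains $0/0$, $s/1$ and possibly symbols for primitive recursive functions, interpreted naturally in the structure $\mathbb{N}$; an arithmetical theory $T$ is sound if $\mathbb{N}\models T$. $\mathrm{Tr}(L(T))$ is the set of $L(T)$ sentences true in $\mathbb{N}$. $T_1\sqsubseteq_{L} T_2$ means $T_2$ proves every $L$ formula that $T_1$ proves. Skolem symbols $\mathfrak{s}_{Qx\varphi}$ (a new function symbol of arity $|\mathrm{FV}(Qx\varphi)|$ for each formula $Qx\varphi$, $Q\in\{\forall,\exists\}$), $\mathit{sk}^\omega(L)$ is the closure of $L$ under adding these symbols. $\mathrm{SA}_L$: universal closures of $\exists x\varphi(x,\vec y)\to\varphi(\mathfrak{s}_{\exists x\varphi}(\vec y),\vec y)$ and $\varphi(\mathfrak{s}_{\forall x\varphi}(\vec y),\vec y)\to\forall x\varphi(x,\vec y)$ for all $\mathit{sk}^\omega(L)$ formulas $\varphi$. $I_x\varphi=\forall\vec z(\varphi(0,\vec z)\wedge\forall x(\varphi(x,\vec z)\to\varphi(s(x),\vec z))\to\forall x\varphi(x,\vec z))$; $\mathrm{IND}(L')=\{I_x\varphi:\varphi$ an $L'$ formula$\}$. *)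

theory Defs
  imports Main
begin

inductive primrec_fn :: "nat \<Rightarrow> (nat list \<Rightarrow> nat) \<Rightarrow> bool" where
  pr_zero: "primrec_fn n (\<lambda>_. 0)"
| pr_succ: "primrec_fn 1 (\<lambda>xs. Suc (xs ! 0))"
| pr_proj: "i < n \<Longrightarrow> primrec_fn n (\<lambda>xs. xs ! i)"
| pr_comp: "primrec_fn m g \<Longrightarrow> length hs = m \<Longrightarrow> (\<forall>h\<in>set hs. primrec_fn n h)
            \<Longrightarrow> primrec_fn n (\<lambda>xs. g (map (\<lambda>h. h xs) hs))"
| pr_rec: "primrec_fn n g \<Longrightarrow> primrec_fn (n + 2) h
           \<Longrightarrow> primrec_fn (n + 1)
                (\<lambda>xs. rec_nat (g (tl xs)) (\<lambda>k r. h (k # r # tl xs)) (hd xs))"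
| pr_ext: "primrec_fn n f \<Longrightarrow> (\<forall>xs. length xs = n \<longrightarrow> f' xs = f xs) \<Longrightarrow> primrec_fn n f'"

text \<open>A symbol is either a primitive-recursive function symbol PR n f (arity n, natural
interpretation f) or a Skolem symbol Sk q x phi for the formula Q x phi, where q = True means
Q = forall and q = False means Q = exists.\<close>

datatype sym = PR nat "nat list \<Rightarrow> nat" | Sk bool nat fm
and trm = Var nat | App sym "trm list"
and fm = Fls | Eq trm trm | Imp fm fm | All nat fm

definition Neg :: "fm \<Rightarrow> fm" where "Neg p = Imp p Fls"
definition Ex :: "nat \<Rightarrow> fm \<Rightarrow> fm" where "Ex x p = Neg (All x (Neg p))"
definition And :: "fm \<Rightarrow> fm \<Rightarrow> fm" where "And p q = Neg (Imp p (Neg q))"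

fun fvt :: "trm \<Rightarrow> nat set" where
  "fvt (Var x) = {x}"
| "fvt (App f ts) = (\<Union>t\<in>set ts. fvt t)"

fun fv :: "fm \<Rightarrow> nat set" where
  "fv Fls = {}"
| "fv (Eq s t) = fvt s \<union> fvt t"
| "fv (Imp p q) = fv p \<union> fv q"
| "fv (All x p) = fv p - {x}"

fun appst :: "trm \<Rightarrow> (sym \<times> nat) set" where
  "appst (Var x) = {}"
| "appst (App f ts) = insert (f, length ts) (\<Union>t\<in>set ts. appst t)"

fun apps :: "fm \<Rightarrow> (sym \<times> nat) set" where
  "apps Fls = {}"
| "apps (Eq s t) = appst s \<union> appst t"
| "apps (Imp p q) = apps p \<union> apps q"
| "apps (All x p) = apps p"

fun arity :: "sym \<Rightarrow> nat" where
  "arity (PR n f) = n"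
| "arity (Sk q x p) = card (fv p - {x})"

definition wft :: "sym set \<Rightarrow> trm \<Rightarrow> bool" where
  "wft L t \<longleftrightarrow> (\<forall>(f, k)\<in>appst t. f \<in> L \<and> k = arity f)"

definition wff :: "sym set \<Rightarrow> fm \<Rightarrow> bool" where
  "wff L p \<longleftrightarrow> (\<forall>(f, k)\<in>apps p. f \<in> L \<and> k = arity f)"

definition sentence :: "sym set \<Rightarrow> fm \<Rightarrow> bool" where
  "sentence L p \<longleftrightarrow> wff L p \<and> fv p = {}"

definition zero_sym :: sym where "zero_sym = PR 0 (\<lambda>_. 0)"
definition succ_sym :: sym where "succ_sym = PR 1 (\<lambda>xs. Suc (xs ! 0))"

definition arith_lang :: "sym set \<Rightarrow> bool" where
  "arith_lang L \<longleftrightarrow> zero_sym \<in> L \<and> succ_sym \<in> L \<and>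
     (\<forall>f\<in>L. \<exists>n g. f = PR n g \<and> primrec_fn n g)"

inductive_set skw :: "sym set \<Rightarrow> sym set" for L :: "sym set" where
  base: "f \<in> L \<Longrightarrow> f \<in> skw L"
| sk: "\<forall>fk\<in>apps p. fst fk \<in> skw L \<and> snd fk = arity (fst fk) \<Longrightarrow> Sk q x p \<in> skw L"

fun substt :: "(nat \<Rightarrow> trm) \<Rightarrow> trm \<Rightarrow> trm" where
  "substt s (Var x) = s x"
| "substt s (App f ts) = App f (map (substt s) ts)"

fun ssubst :: "(nat \<Rightarrow> trm) \<Rightarrow> fm \<Rightarrow> fm" where
  "ssubst s Fls = Fls"
| "ssubst s (Eq a b) = Eq (substt s a) (substt s b)"
| "ssubst s (Imp p q) = Imp (ssubst s p) (ssubst s q)"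
| "ssubst s (All y p) =
     (let V = (\<Union>w\<in>fv p - {y}. fvt (s w));
          z = (if y \<in> V then Suc (Max (V \<union> fv p)) else y)
      in All z (ssubst (s(y := Var z)) p))"

definition subst :: "nat \<Rightarrow> trm \<Rightarrow> fm \<Rightarrow> fm" where
  "subst x t p = ssubst (Var(x := t)) p"

definition vars_list :: "nat set \<Rightarrow> nat list" where
  "vars_list V = sorted_list_of_set V"

definition close_vars :: "nat list \<Rightarrow> fm \<Rightarrow> fm" where
  "close_vars xs p = foldr All xs p"

definition univ_closure :: "fm \<Rightarrow> fm" where
  "univ_closure p = close_vars (vars_list (fv p)) p"

fun evalt :: "(sym \<Rightarrow> nat list \<Rightarrow> nat) \<Rightarrow> (nat \<Rightarrow> nat) \<Rightarrow> trm \<Rightarrow> nat" where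
  "evalt I e (Var x) = e x"
| "evalt I e (App f ts) = I f (map (evalt I e) ts)"

fun sat :: "(sym \<Rightarrow> nat list \<Rightarrow> nat) \<Rightarrow> (nat \<Rightarrow> nat) \<Rightarrow> fm \<Rightarrow> bool" where
  "sat I e Fls = False"
| "sat I e (Eq a b) = (evalt I e a = evalt I e b)"
| "sat I e (Imp p q) = (sat I e p \<longrightarrow> sat I e q)"
| "sat I e (All x p) = (\<forall>n. sat I (e(x := n)) p)"

text \<open>Natural interpretation of arithmetical symbols (Skolem symbols never occur in
L(T) formulas; they get a dummy value).\<close>
fun natI :: "sym \<Rightarrow> nat list \<Rightarrow> nat" where
  "natI (PR n f) = f"
| "natI (Sk q x p) = (\<lambda>_. 0)"

definition Tr :: "sym set \<Rightarrow> fm set" where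
  "Tr L = {p. sentence L p \<and> (\<forall>e. sat natI e p)}"

definition atomic :: "fm \<Rightarrow> bool" where
  "atomic p \<longleftrightarrow> p = Fls \<or> (\<exists>a b. p = Eq a b)"

inductive lax :: "sym set \<Rightarrow> fm \<Rightarrow> bool" for L :: "sym set" where
  ax_K: "wff L p \<Longrightarrow> wff L q \<Longrightarrow> lax L (Imp p (Imp q p))"
| ax_S: "wff L p \<Longrightarrow> wff L q \<Longrightarrow> wff L r \<Longrightarrow>
         lax L (Imp (Imp p (Imp q r)) (Imp (Imp p q) (Imp p r)))"
| ax_DN: "wff L p \<Longrightarrow> lax L (Imp (Neg (Neg p)) p)"
| ax_inst: "wff L p \<Longrightarrow> wft L t \<Longrightarrow> lax L (Imp (All x p) (subst x t p))"
| ax_dist: "wff L p \<Longrightarrow> wff L q \<Longrightarrow> lax L (Imp (All x (Imp p q)) (Imp (All x p) (All x q)))"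
| ax_vac: "wff L p \<Longrightarrow> x \<notin> fv p \<Longrightarrow> lax L (Imp p (All x p))"
| ax_refl: "lax L (Eq (Var x) (Var x))"
| ax_leib: "wff L p \<Longrightarrow> atomic p \<Longrightarrow> wft L a \<Longrightarrow> wft L b \<Longrightarrow>
            lax L (Imp (Eq a b) (Imp (subst x a p) (subst x b p)))"
| ax_gen: "lax L p \<Longrightarrow> lax L (All x p)"

inductive prv :: "sym set \<Rightarrow> fm set \<Rightarrow> fm \<Rightarrow> bool" for L :: "sym set" and G :: "fm set" where
  hyp: "p \<in> G \<Longrightarrow> prv L G p"
| logax: "lax L p \<Longrightarrow> prv L G p"
| mp: "prv L G (Imp p q) \<Longrightarrow> prv L G p \<Longrightarrow> prv L G q"

definition below :: "sym set \<Rightarrow> sym set \<times> fm set \<Rightarrow> sym set \<times> fm set \<Rightarrow> bool" where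
  "below L T1 T2 \<longleftrightarrow>
     (\<forall>p. wff L p \<longrightarrow> prv (fst T1) (snd T1) p \<longrightarrow> prv (fst T2) (snd T2) p)"

definition skargs :: "nat \<Rightarrow> fm \<Rightarrow> trm list" where
  "skargs x p = map Var (vars_list (fv p - {x}))"

definition SA :: "sym set \<Rightarrow> fm set" where
  "SA L = {univ_closure (Imp (Ex x p) (subst x (App (Sk False x p) (skargs x p)) p)) | x p.
             wff (skw L) p}
        \<union> {univ_closure (Imp (subst x (App (Sk True x p) (skargs x p)) p) (All x p)) | x p.
             wff (skw L) p}"

definition ind_ax :: "nat \<Rightarrow> fm \<Rightarrow> fm" where
  "ind_ax x p = close_vars (vars_list (fv p - {x}))
     (Imp (And (subst x (App zero_sym []) p)
               (All x (Imp p (subst x (App succ_sym [Var x]) p))))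
          (All x p))"

definition IND :: "sym set \<Rightarrow> fm set" where
  "IND L' = {ind_ax x p | x p. wff L' p}"

end

theory Submission
  imports Defs
begin
function skv :: "bool \<Rightarrow> nat \<Rightarrow> fm \<Rightarrow> nat list \<Rightarrow> nat"
 and evs :: "(nat \<Rightarrow> nat) \<Rightarrow> trm \<Rightarrow> nat"
 and sts :: "(nat \<Rightarrow> nat) \<Rightarrow> fm \<Rightarrow> bool" where
 "skv q x p args = (let e' = (\<lambda>v. case map_of (zip (vars_list (fv p - {x})) args) v of Some a \<Rightarrow> a | None \<Rightarrow> 0)
    in if q then (SOME n. \<not> sts (e'(x:=n)) p) else (SOME n. sts (e'(x:=n)) p))"
| "evs e (Var v) = e v"
| "evs e (App (PR n g) ts) = g (map (evs e) ts)"
| "evs e (App (Sk q x p) ts) = skv q x p (map (evs e) ts)"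
| "sts e Fls = False"
| "sts e (Eq a b) = (evs e a = evs e b)"
| "sts e (Imp p q) = (sts e p \<longrightarrow> sts e q)"
| "sts e (All x p) = (\<forall>n. sts (e(x:=n)) p)"
  by pat_completeness auto
termination
  apply (relation "measure (\<lambda>x. case x of Inl (q,x,p,args) \<Rightarrow> size p + 1 | Inr (Inl (e,t)) \<Rightarrow> size t | Inr (Inr (e,p)) \<Rightarrow> size p)")
  apply auto
  apply (simp_all add: le_imp_less_Suc size_list_estimation' trans_le_add1)
  subgoal for p ts t
    using size_list_estimation'[of t ts "size t" size] by simp
  done

definition skI :: "sym \<Rightarrow> nat list \<Rightarrow> nat" where
  "skI f = (case f of PR n g \<Rightarrow> g | Sk q x p \<Rightarrow> skv q x p)"

lemma evs_eq: "evs e t = evalt skI e t"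
  by (induction t rule: fvt.induct) (auto simp: skI_def split: sym.splits cong: map_cong)

lemma sts_eq: "sts e p = sat skI e p"
  by (induction p arbitrary: e rule: fv.induct) (auto simp: evs_eq)

lemma skI_Sk: "skI (Sk q x p) args = (let e' = (\<lambda>v. case map_of (zip (vars_list (fv p - {x})) args) v of Some a \<Rightarrow> a | None \<Rightarrow> 0)
    in if q then (SOME n. \<not> sat skI (e'(x:=n)) p) else (SOME n. sat skI (e'(x:=n)) p))"
  by (simp add: skI_def sts_eq Let_def)

lemma finite_fvt: "finite (fvt t)"
  by (induction t rule: fvt.induct) auto
lemma finite_fv: "finite (fv p)"
  by (induction p rule: fv.induct) (auto simp: finite_fvt)

lemma evalt_coinc: "(\<forall>v\<in>fvt t. e v = e' v) \<Longrightarrow> evalt I e t = evalt I e' t"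
  by (induction t rule: fvt.induct) (auto cong: map_cong)

lemma sat_coinc: "(\<forall>v\<in>fv p. e v = e' v) \<Longrightarrow> sat I e p = sat I e' p"
proof (induction p arbitrary: e e' rule: fv.induct)
  case (2 s t) then show ?case using evalt_coinc[of s e e' I] evalt_coinc[of t e e' I] by auto
next
  case (4 x p)
  have "\<And>n. sat I (e(x:=n)) p = sat I (e'(x:=n)) p" using 4 by (intro "4.IH") auto
  then show ?case by simp
next
  case (3 p q)
  then have "sat I e p = sat I e' p" "sat I e q = sat I e' q" by auto
  then show ?case by simp
qed auto

lemma evalt_sym: "(\<forall>(f,k)\<in>appst t. I f = J f) \<Longrightarrow> evalt I e t = evalt J e t"
  by (induction t rule: appst.induct) (auto cong: map_cong)

lemma sat_sym: "(\<forall>(f,k)\<in>apps p. I f = J f) \<Longrightarrow> sat I e p = sat J e p"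
  by (induction p arbitrary: e rule: apps.induct) (auto simp: evalt_sym[of _ I J])

lemma evalt_substt: "evalt I e (substt s t) = evalt I (\<lambda>v. evalt I e (s v)) t"
  by (induction s t rule: substt.induct) (auto cong: map_cong)

lemma sat_ssubst: "sat I e (ssubst s p) = sat I (\<lambda>v. evalt I e (s v)) p"
proof (induction s p arbitrary: e rule: ssubst.induct)
  case (4 s y p)
  define V where "V = (\<Union>w\<in>fv p - {y}. fvt (s w))"
  define z where "z = (if y \<in> V then Suc (Max (V \<union> fv p)) else y)"
  have finV: "finite V" unfolding V_def by (auto simp: finite_fv finite_fvt)
  have zV: "z \<notin> V"
  proof (cases "y \<in> V")
    case True
    have "finite (V \<union> fv p)" using finV finite_fv by auto
    then have "\<forall>w\<in>V. w \<le> Max (V \<union> fv p)" by auto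
    then show ?thesis using True unfolding z_def by auto
  qed (auto simp: z_def)
  have eq: "ssubst s (All y p) = All z (ssubst (s(y := Var z)) p)"
    by (simp add: V_def z_def Let_def)
  have "sat I (e(z:=n)) (ssubst (s(y := Var z)) p) = sat I ((\<lambda>v. evalt I e (s v))(y:=n)) p" for n
  proof -
    have "sat I (e(z:=n)) (ssubst (s(y := Var z)) p) = sat I (\<lambda>v. evalt I (e(z:=n)) ((s(y := Var z)) v)) p"
      by (rule "4.IH") (auto simp: V_def z_def Let_def)
    also have "\<dots> = sat I ((\<lambda>v. evalt I e (s v))(y:=n)) p"
    proof (rule sat_coinc, intro ballI)
      fix v assume v: "v \<in> fv p"
      show "evalt I (e(z := n)) ((s(y := Var z)) v) = ((\<lambda>v. evalt I e (s v))(y := n)) v"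
      proof (cases "v = y")
        case False
        then have "z \<notin> fvt (s v)" using zV v unfolding V_def by auto
        then show ?thesis using False by (auto intro: evalt_coinc)
      qed simp
    qed
    finally show ?thesis .
  qed
  then show ?case by (simp only: eq sat.simps)
qed (auto simp: evalt_substt)

lemma sat_subst: "sat I e (subst x t p) = sat I (e(x := evalt I e t)) p"
  unfolding subst_def sat_ssubst by (rule sat_coinc) auto

lemma ssubst_Var: "ssubst Var p = p"
proof (induction p rule: fv.induct)
  case (4 x p)
  have "substt Var t = t" for t by (induction t rule: fvt.induct) (auto simp: map_idI)
  then show ?case using 4 by (simp add: Let_def)
next
  case (2 a b)
  have "substt Var t = t" for t by (induction t rule: fvt.induct) (auto simp: map_idI)
  then show ?case by simp
qed auto

lemma sat_close_vars: "(\<forall>e. sat I e p) \<Longrightarrow> sat I e (close_vars xs p)"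
  by (induction xs arbitrary: e) (auto simp: close_vars_def)

lemma sat_univ_closure: "(\<forall>e. sat I e p) \<Longrightarrow> sat I e (univ_closure p)"
  unfolding univ_closure_def by (rule sat_close_vars)

lemma lax_sound: "lax L p \<Longrightarrow> sat I e p"
proof (induction p arbitrary: e rule: lax.induct)
  case (ax_inst p t x)
  then show ?case by (simp add: sat_subst)
next
  case (ax_vac p x)
  have "sat I (e(x:=n)) p = sat I e p" for n by (rule sat_coinc) (use ax_vac in auto)
  then show ?case using ax_vac by simp
next
  case (ax_leib p a b x)
  then show ?case by (simp add: sat_subst)
qed (auto simp: Neg_def)

lemma prv_sound: "prv L G p \<Longrightarrow> (\<forall>q\<in>G. \<forall>e. sat I e q) \<Longrightarrow> sat I e p"
  by (induction p arbitrary: e rule: prv.induct) (auto intro: lax_sound)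

lemma set_vars_list: "set (vars_list (fv p - {x})) = fv p - {x}"
  unfolding vars_list_def by (simp add: finite_fv)

lemma skI_args: "skI (Sk q x p) (map e (vars_list (fv p - {x}))) =
   (if q then (SOME n. \<not> sat skI (e(x:=n)) p) else (SOME n. sat skI (e(x:=n)) p))"
proof -
  let ?vs = "vars_list (fv p - {x})"
  let ?e' = "(\<lambda>v. case map_of (zip ?vs (map e ?vs)) v of Some a \<Rightarrow> a | None \<Rightarrow> 0)"
  have "sat skI (?e'(x:=n)) p = sat skI (e(x:=n)) p" for n
    by (rule sat_coinc) (auto simp: map_of_zip_map set_vars_list)
  then show ?thesis by (simp add: skI_Sk Let_def)
qed

lemma eval_skargs: "map (evalt I e) (skargs x p) = map e (vars_list (fv p - {x}))"
  by (simp add: skargs_def)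

lemma SA_sound: "q \<in> SA L \<Longrightarrow> sat skI e q"
  unfolding SA_def
proof (elim UnE CollectE exE conjE)
  fix x p assume q: "q = univ_closure (Imp (Ex x p) (subst x (App (Sk False x p) (skargs x p)) p))"
  have "sat skI e (Imp (Ex x p) (subst x (App (Sk False x p) (skargs x p)) p))" for e
  proof -
    have "(\<exists>n. sat skI (e(x:=n)) p) \<longrightarrow> sat skI (e(x := SOME n. sat skI (e(x:=n)) p)) p"
      by (auto intro: someI)
    then show ?thesis by (simp add: Ex_def Neg_def sat_subst eval_skargs skI_args)
  qed
  then show "sat skI e q" unfolding q by (intro sat_univ_closure) auto
next
  fix x p assume q: "q = univ_closure (Imp (subst x (App (Sk True x p) (skargs x p)) p) (All x p))"
  have "sat skI e (Imp (subst x (App (Sk True x p) (skargs x p)) p) (All x p))" for e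
  proof -
    have "sat skI (e(x := SOME n. \<not> sat skI (e(x:=n)) p)) p \<longrightarrow> (\<forall>n. sat skI (e(x:=n)) p)"
    proof
      assume h: "sat skI (e(x := SOME n. \<not> sat skI (e(x:=n)) p)) p"
      show "\<forall>n. sat skI (e(x:=n)) p"
      proof (rule ccontr)
        assume "\<not> (\<forall>n. sat skI (e(x:=n)) p)"
        then have "\<exists>n. \<not> sat skI (e(x:=n)) p" by blast
        then have "\<not> sat skI (e(x := SOME n. \<not> sat skI (e(x:=n)) p)) p" by (rule someI_ex)
        with h show False by simp
      qed
    qed
    moreover have "sat skI e (subst x (App (Sk True x p) (skargs x p)) p) = sat skI (e(x := SOME n. \<not> sat skI (e(x:=n)) p)) p"
      unfolding sat_subst evalt.simps eval_skargs skI_args by simp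
    ultimately show ?thesis unfolding sat.simps by blast
  qed
  then show "sat skI e q" unfolding q by (intro sat_univ_closure) auto
qed

lemma IND_sound: "q \<in> IND L' \<Longrightarrow> sat skI e q"
  unfolding IND_def
proof (elim CollectE exE conjE)
  fix x p assume q: "q = ind_ax x p"
  have "sat skI e (Imp (And (subst x (App zero_sym []) p)
               (All x (Imp p (subst x (App succ_sym [Var x]) p))))
          (All x p))" for e
  proof -
    have "sat skI (e(x:=0)) p \<longrightarrow> (\<forall>n. sat skI (e(x:=n)) p \<longrightarrow> sat skI (e(x:=Suc n)) p) \<longrightarrow> sat skI (e(x:=n)) p" for n
      by (induction n) auto
    moreover have z: "evalt skI e (App zero_sym []) = 0" by (simp add: zero_sym_def skI_def)
    moreover have s: "evalt skI (e(x:=n)) (App succ_sym [Var x]) = Suc n" for n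
      by (simp add: succ_sym_def skI_def)
    ultimately show ?thesis unfolding And_def Neg_def sat.simps sat_subst z s fun_upd_upd by blast
  qed
  then show "sat skI e q" unfolding q ind_ax_def by (intro sat_close_vars) auto
qed

lemma wff_L_sat: "arith_lang L \<Longrightarrow> wff L p \<Longrightarrow> sat skI e p = sat natI e p"
proof (rule sat_sym, intro ballI, clarify)
  fix f k assume "arith_lang L" "wff L p" "(f, k) \<in> apps p"
  then have "f \<in> L" by (auto simp: wff_def)
  then obtain n g where "f = PR n g" using \<open>arith_lang L\<close> by (auto simp: arith_lang_def)
  then show "skI f = natI f" by (simp add: skI_def)
qed

lemma prv_unclose: "prv L G (close_vars xs p) \<Longrightarrow> wff L p \<Longrightarrow> prv L G p"
proof (induction xs)
  case (Cons x xs)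
  have w: "wff L (close_vars xs p)" using Cons.prems(2)
    by (induction xs) (auto simp: close_vars_def wff_def)
  have "lax L (Imp (All x (close_vars xs p)) (subst x (Var x) (close_vars xs p)))"
    by (rule ax_inst[OF w]) (simp add: wft_def)
  moreover have "subst x (Var x) (close_vars xs p) = close_vars xs p"
    by (simp add: subst_def ssubst_Var)
  moreover have "prv L G (All x (close_vars xs p))" using Cons.prems(1) by (simp add: close_vars_def)
  ultimately have "prv L G (close_vars xs p)"
    by (metis logax mp)
  then show ?case using Cons by auto
qed (simp add: close_vars_def)

lemma fv_close_vars: "fv (close_vars xs p) = fv p - set xs"
  by (induction xs) (auto simp: close_vars_def)

lemma wff_close_vars: "wff L (close_vars xs p) = wff L p"
  by (induction xs) (auto simp: close_vars_def wff_def)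

theorem proposition7:
  fixes L :: "sym set" and T :: "fm set"
  assumes "arith_lang L"
    and "\<forall>p\<in>T. sentence L p"
    and "\<forall>p\<in>T. \<forall>e. sat natI e p"
  shows "below L (skw L, SA L \<union> T \<union> IND (skw L)) (L, Tr L)"
  unfolding below_def fst_conv snd_conv
proof (intro allI impI)
  fix p assume w: "wff L p" and pr: "prv (skw L) (SA L \<union> T \<union> IND (skw L)) p"
  have "\<forall>q\<in>SA L \<union> T \<union> IND (skw L). \<forall>e. sat skI e q"
  proof (intro ballI allI)
    fix q e assume "q \<in> SA L \<union> T \<union> IND (skw L)"
    then consider "q \<in> SA L" | "q \<in> T" | "q \<in> IND (skw L)" by blast
    then show "sat skI e q"
    proof cases
      case 1 then show ?thesis by (rule SA_sound)
    next
      case 2 then have "sentence L q" "sat natI e q" using assms(2,3) by auto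
      then show ?thesis using wff_L_sat[OF assms(1)] by (simp add: sentence_def)
    next
      case 3 then show ?thesis by (rule IND_sound)
    qed
  qed
  then have "sat skI e p" for e using prv_sound[OF pr] by blast
  then have v: "sat natI e p" for e using wff_L_sat[OF assms(1) w] by simp
  have "univ_closure p \<in> Tr L"
    unfolding Tr_def sentence_def univ_closure_def
    using w v by (auto simp: fv_close_vars wff_close_vars vars_list_def finite_fv intro: sat_close_vars)
  then have "prv L (Tr L) (univ_closure p)" by (rule hyp)
  then show "prv L (Tr L) p" unfolding univ_closure_def using w by (rule prv_unclose)
qed

end
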